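(* Let $(Z,\mathbb{Z}^k,S)$ be an aperiodic zero-dimensional system. For every $R>0$ there is $L_0>0$ such that for every positive integer $L\ge L_0$ and every clopen $U\subset Z$ with $Z=\bigcup_{|n|<L}S^nU$ and $U\cap S^nU=\emptyset$ for $0<|n|<L$, the following holds: for every $x\in Z$ and every $n\in C(x)$, \[\frac{|\partial^{\mathbb{Z}}_RV^{\mathbb{Z}}(x,n)|}{|V^{\mathbb{Z}}(x,n)|}<\frac1R.\]
   Context: Given such $L$ and $U$: $C(x)=\{n\in\mathbb{Z}^k: S^nx\in U\}$; for $n\in C(x)$, $V(x,n)=\{u\in\mathbb{R}^k:|u-n|\le|u-m|\ \forall m\in C(x)\}$ (Euclidean norm) and $V^{\mathbb{Z}}(x,n)=V(x,n)\cap\mathbb{Z}^k$. For $\Omega\subset\mathbb{Z}^k$ and $R>0$, $\partial^{\mathbb{Z}}_R\Omega$ is the set of $n\in\mathbb{Z}^k$ for which there exist $m\in\Omega$ and $m'\in\mathbb{Z}^k\setminus\Omega$ with $|n-m|\le R$ and $|n-m'|\le R$. Aperiodic: the action is free; zero-dimensional: clopen sets form a basis. *)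

theory Defs
  imports "HOL-Analysis.Analysis"
begin

text \<open>Lattice points of \<open>\<int>^k\<close> are vectors \<open>int ^ 'k\<close>; the dimension is \<open>k = CARD('k)\<close>.\<close>

definition rvec :: "int ^ 'k \<Rightarrow> real ^ 'k" where
  "rvec n = (\<chi> i. real_of_int (n $ i))"

definition znorm :: "int ^ 'k \<Rightarrow> real" where
  "znorm n = norm (rvec n)"

definition zk_system :: "(int ^ 'k \<Rightarrow> 'a::metric_space \<Rightarrow> 'a) \<Rightarrow> bool" where
  "zk_system S \<longleftrightarrow> compact (UNIV :: 'a set) \<and>
     (\<forall>n. continuous_on UNIV (S n)) \<and>
     S 0 = id \<and> (\<forall>m n. S (m + n) = S m \<circ> S n)"

definition aperiodic :: "(int ^ 'k \<Rightarrow> 'a \<Rightarrow> 'a) \<Rightarrow> bool" where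
  "aperiodic S \<longleftrightarrow> (\<forall>x n. S n x = x \<longrightarrow> n = 0)"

definition zero_dimensional :: "'a::topological_space itself \<Rightarrow> bool" where
  "zero_dimensional _ \<longleftrightarrow>
     (\<forall>V x. open (V::'a set) \<and> x \<in> V \<longrightarrow> (\<exists>W. open W \<and> closed W \<and> x \<in> W \<and> W \<subseteq> V))"

definition retC :: "(int ^ 'k \<Rightarrow> 'a \<Rightarrow> 'a) \<Rightarrow> 'a set \<Rightarrow> 'a \<Rightarrow> (int ^ 'k) set" where
  "retC S U x = {n. S n x \<in> U}"

definition voronoi :: "(int ^ 'k \<Rightarrow> 'a \<Rightarrow> 'a) \<Rightarrow> 'a set \<Rightarrow> 'a \<Rightarrow> int ^ 'k \<Rightarrow> (real ^ 'k) set" where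
  "voronoi S U x n = {u. \<forall>m \<in> retC S U x. dist u (rvec n) \<le> dist u (rvec m)}"

definition voronoiZ :: "(int ^ 'k \<Rightarrow> 'a \<Rightarrow> 'a) \<Rightarrow> 'a set \<Rightarrow> 'a \<Rightarrow> int ^ 'k \<Rightarrow> (int ^ 'k) set" where
  "voronoiZ S U x n = {m. rvec m \<in> voronoi S U x n}"

definition boundaryZ :: "real \<Rightarrow> (int ^ 'k) set \<Rightarrow> (int ^ 'k) set" where
  "boundaryZ R \<Omega> = {n. (\<exists>m \<in> \<Omega>. znorm (n - m) \<le> R) \<and> (\<exists>m'. m' \<notin> \<Omega> \<and> znorm (n - m') \<le> R)}"

end

theory Submission
  imports Defs
begin


lemma rvec_diff: "rvec (a - b) = rvec a - rvec b"
  by (simp add: rvec_def vec_eq_iff)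

lemma rvec_inj: "rvec a = rvec b \<Longrightarrow> a = b"
  by (simp add: rvec_def vec_eq_iff)

lemma rvec_zero_iff: "rvec a = 0 \<longleftrightarrow> a = 0"
  by (simp add: rvec_def vec_eq_iff)

definition cube :: "int ^ 'k \<Rightarrow> (real ^ 'k) set" where
  "cube p = cbox (rvec p - (\<chi> i. 1/2)) (rvec p + (\<chi> i. 1/2))"

lemma mem_cube: "y \<in> cube p \<longleftrightarrow> (\<forall>i. \<bar>y $ i - real_of_int (p $ i)\<bar> \<le> 1/2)"
  unfolding cube_def mem_box_cart by (intro iff_allI) (auto simp: rvec_def split: abs_split)

lemma cube_round: "y \<in> cube (\<chi> i. round (y $ i))"
proof -
  have "\<bar>y $ i - real_of_int (round (y $ i))\<bar> \<le> 1/2" for i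
    using of_int_round_abs_le[of "y $ i"] by (simp add: abs_minus_commute)
  then show ?thesis by (simp add: mem_cube)
qed

lemma cube_norm:
  assumes "y \<in> cube (p :: int ^ 'k)"
  shows "norm (y - rvec p) \<le> real CARD('k) / 2"
proof -
  have "norm (y - rvec p) \<le> (\<Sum>i\<in>UNIV. \<bar>(y - rvec p) $ i\<bar>)" by (rule norm_le_l1_cart)
  also have "\<dots> \<le> (\<Sum>i\<in>(UNIV::'k set). 1/2)"
    by (rule sum_mono) (use assms in \<open>simp add: mem_cube rvec_def\<close>)
  finally show ?thesis by simp
qed

lemma cube_lmeasurable: "cube p \<in> lmeasurable"
  by (simp add: cube_def)

lemma measure_cube: "measure lebesgue (cube p) = 1"
proof -
  have ne: "cube p \<noteq> {}" using mem_cube[of "rvec p" p] by (auto simp: rvec_def)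
  have "measure lebesgue (cube p) = measure lborel (cube p)"
    unfolding cube_def by (metis cbox_borel measure_completion sets_lborel)
  also have "\<dots> = 1" using ne unfolding cube_def
    by (subst content_cbox_cart) simp_all
  finally show ?thesis .
qed

lemma mid_aux:
  fixes a b x :: real
  assumes h: "a + 1 \<le> b \<or> b + 1 \<le> a" "a - x \<le> 1/2" "x - a \<le> 1/2" "b - x \<le> 1/2" "x - b \<le> 1/2"
  shows "x = (a+b)/2"
proof -
  have "2 * x = a + b"
  proof (cases "a + 1 \<le> b")
    case True then show ?thesis using h(2-5) by linarith
  next
    case False then have F: "b + 1 \<le> a" using h(1) by blast
    then show ?thesis using h(2-5) by linarith
  qed
  then show ?thesis by simp
qed

lemma cube_negligible:
  assumes "p \<noteq> q"
  shows "negligible (cube p \<inter> cube (q :: int ^ 'k))"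
proof -
  obtain i where i: "p $ i \<noteq> q $ i" using assms by (auto simp: vec_eq_iff)
  have sub: "cube p \<inter> cube q \<subseteq> {x. x \<bullet> axis i 1 = (real_of_int (p $ i) + real_of_int (q $ i)) / 2}"
  proof
    fix x assume x: "x \<in> cube p \<inter> cube q"
    then have a: "\<bar>x $ i - real_of_int (p $ i)\<bar> \<le> 1/2" "\<bar>x $ i - real_of_int (q $ i)\<bar> \<le> 1/2"
      by (auto simp: mem_cube)
    have "p $ i < q $ i \<or> q $ i < p $ i" using i by auto
    then have "p $ i + 1 \<le> q $ i \<or> q $ i + 1 \<le> p $ i" by auto
    then have "real_of_int (p $ i) + 1 \<le> real_of_int (q $ i) \<or> real_of_int (q $ i) + 1 \<le> real_of_int (p $ i)"
      by (metis of_int_1 of_int_add of_int_le_iff)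
    moreover have "real_of_int (p $ i) - x $ i \<le> 1/2" "x $ i - real_of_int (p $ i) \<le> 1/2"
      "real_of_int (q $ i) - x $ i \<le> 1/2" "x $ i - real_of_int (q $ i) \<le> 1/2"
      using abs_le_D1[OF a(1)] abs_le_D2[OF a(1)] abs_le_D1[OF a(2)] abs_le_D2[OF a(2)] by simp_all
    ultimately have "x $ i = (real_of_int (p $ i) + real_of_int (q $ i)) / 2" by (rule mid_aux)
    then show "x \<in> {x. x \<bullet> axis i 1 = (real_of_int (p $ i) + real_of_int (q $ i)) / 2}"
      by (simp add: cart_eq_inner_axis[symmetric])
  qed
  have "axis i (1::real) \<in> Basis" by (simp add: Basis_vec_def) blast
  then show ?thesis using negligible_standard_hyperplane negligible_subset sub by blast
qed

lemma count_le_measure: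
  assumes A: "A \<in> lmeasurable" and sub: "\<And>p. p \<in> P \<Longrightarrow> cube p \<subseteq> A"
  shows "finite (P :: (int ^ 'k) set) \<and> real (card P) \<le> measure lebesgue A"
proof -
  have fin: "real (card F) \<le> measure lebesgue A" if F: "finite F" "F \<subseteq> P" for F
  proof -
    have "real (card F) = (\<Sum>p\<in>F. measure lebesgue (cube p))" by (simp add: measure_cube)
    also have "\<dots> = measure lebesgue (\<Union>(cube ` F))"
      by (rule measure_negligible_finite_Union_image[symmetric])
         (use F in \<open>auto simp: cube_lmeasurable pairwise_def cube_negligible\<close>)
    also have "\<dots> \<le> measure lebesgue A"
      by (rule measure_mono_fmeasurable) (use F sub A in \<open>auto intro: fmeasurableD[OF fmeasurable.finite_UN] cube_lmeasurable\<close>)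
    finally show ?thesis .
  qed
  have "finite P"
  proof (rule ccontr)
    assume "infinite P"
    then obtain F where "F \<subseteq> P" "finite F" "card F = nat \<lceil>measure lebesgue A\<rceil> + 1"
      using infinite_arbitrarily_large by blast
    with fin[of F] show False by linarith
  qed
  with fin show ?thesis by auto
qed

lemma measure_le_count:
  assumes P: "finite (P :: (int ^ 'k) set)" and B: "B \<in> lmeasurable" and sub: "B \<subseteq> (\<Union>p\<in>P. cube p)"
  shows "measure lebesgue B \<le> real (card P)"
proof -
  have "measure lebesgue B \<le> measure lebesgue (\<Union>p\<in>P. cube p)"
    by (rule measure_mono_fmeasurable) (use P sub B in \<open>auto intro: fmeasurable.finite_UN cube_lmeasurable\<close>)
  also have "\<dots> \<le> (\<Sum>p\<in>P. measure lebesgue (cube p))"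
    by (rule measure_UNION_le) (use P in \<open>auto intro: fmeasurableD cube_lmeasurable\<close>)
  also have "\<dots> = real (card P)" by (simp add: measure_cube)
  finally show ?thesis .
qed



lemma convex_closer:
  fixes a b :: "'a::euclidean_space"
  shows "convex {u. dist u a \<le> dist u b}"
proof -
  have eq: "{u. dist u a \<le> dist u b} = {u. inner (2 *\<^sub>R (b - a)) u \<le> inner b b - inner a a}"
  proof (intro set_eqI iffI; simp only: mem_Collect_eq)
    fix u
    have e: "dist u a \<le> dist u b \<longleftrightarrow> (dist u a)\<^sup>2 \<le> (dist u b)\<^sup>2"
      by (metis abs_le_square_iff abs_of_nonneg zero_le_dist)
    have e2: "(dist u a)\<^sup>2 = inner u u - 2 * inner a u + inner a a" for a
      by (simp add: dist_norm power2_norm_eq_inner inner_diff_left inner_diff_right inner_commute)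
    show "dist u a \<le> dist u b \<Longrightarrow> inner (2 *\<^sub>R (b - a)) u \<le> inner b b - inner a a"
      using e e2[of a] e2[of b] by (simp add: inner_diff_left)
    show "inner (2 *\<^sub>R (b - a)) u \<le> inner b b - inner a a \<Longrightarrow> dist u a \<le> dist u b"
      using e e2[of a] e2[of b] by (simp add: inner_diff_left)
  qed
  show ?thesis unfolding eq by (rule convex_halfspace_le)
qed

definition hom :: "real \<Rightarrow> real ^ 'k \<Rightarrow> (real ^ 'k) set \<Rightarrow> (real ^ 'k) set" where
  "hom l c V = (\<lambda>y. l *\<^sub>R y + (1 - l) *\<^sub>R c) ` V"

lemma hom_out:
  assumes V: "convex V" and B: "cball c r \<subseteq> V" and t: "0 < t"
    and v: "v \<in> V" and w: "norm w \<le> t * r"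
  shows "v + w \<in> hom (1 + t) c V"
proof -
  define z where "z = c + (1/t) *\<^sub>R w"
  have "dist c z = norm w / t" using t by (simp add: z_def dist_norm)
  also have "\<dots> \<le> r" using w t by (simp add: divide_le_eq mult.commute)
  finally have "dist c z \<le> r" .
  then have z: "z \<in> V" using B by auto
  define v' where "v' = (1/(1+t)) *\<^sub>R v + (t/(1+t)) *\<^sub>R z"
  have "v' \<in> V" unfolding v'_def
    by (rule convexD[OF V v z]) (use t in \<open>auto simp: field_simps\<close>)
  moreover have "v + w = (1 + t) *\<^sub>R v' + (1 - (1 + t)) *\<^sub>R c"
    using t by (simp add: v'_def z_def scaleR_add_right algebra_simps) (simp add: field_simps)
  ultimately show ?thesis unfolding hom_def by blast
qed

lemma hom_in:
  assumes V: "convex V" and B: "cball c r \<subseteq> V" and t: "0 < t" "t \<le> 1"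
    and y: "y \<in> hom (1 - t) c V" and w: "norm w \<le> t * r"
  shows "y + w \<in> V"
proof -
  define z where "z = c + (1/t) *\<^sub>R w"
  have "dist c z = norm w / t" using t by (simp add: z_def dist_norm)
  also have "\<dots> \<le> r" using w t by (simp add: divide_le_eq mult.commute)
  finally have "dist c z \<le> r" .
  then have z: "z \<in> V" using B by auto
  obtain v where v: "v \<in> V" and yv: "y = (1 - t) *\<^sub>R v + (1 - (1 - t)) *\<^sub>R c"
    using y unfolding hom_def by blast
  have "y + w = (1 - t) *\<^sub>R v + t *\<^sub>R z"
    using t by (simp add: yv z_def scaleR_add_right algebra_simps)
  also have "\<dots> \<in> V"
    by (rule convexD[OF V v z]) (use t in auto)
  finally show ?thesis .
qed

lemma hom_measure:
  assumes "compact V" and "0 \<le> l"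
  shows "hom l c V \<in> lmeasurable" "measure lebesgue (hom l c V) = l ^ CARD('k) * measure lebesgue (V :: (real ^ 'k) set)"
proof -
  have "compact (hom l c V)" unfolding hom_def
    by (rule compact_continuous_image[OF _ assms(1)]) (intro continuous_intros)
  then show "hom l c V \<in> lmeasurable" by (rule lmeasurable_compact)
  show "measure lebesgue (hom l c V) = l ^ CARD('k) * measure lebesgue V"
    unfolding hom_def using measure_lebesgue_affine[of l "(1 - l) *\<^sub>R c" V] assms(2) by simp
qed



lemma exists_t0:
  fixes R :: real and k :: nat
  assumes R: "R > 0"
  shows "\<exists>t. 0 < t \<and> t < 1 \<and> (1+t)^k - (1-t)^k < (1/R) * (1-t)^k"
proof -
  define g where "g t = (1+t)^k - (1-t)^k - (1/R) * (1-t)^k" for t :: real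
  have "isCont g 0" unfolding g_def by (intro continuous_intros)
  then have "(g \<longlongrightarrow> g 0) (at 0)" by (simp add: isCont_def)
  moreover have "g 0 < 0" using R by (simp add: g_def)
  ultimately have "eventually (\<lambda>t. g t < 0) (at 0)" by (rule order_tendstoD(2))
  then obtain d where d: "d > 0" "\<And>t. t \<noteq> 0 \<Longrightarrow> dist t 0 < d \<Longrightarrow> g t < 0"
    by (auto simp: eventually_at)
  define t where "t = min (d/2) (1/2)"
  have "t > 0" "t < 1" "t \<noteq> 0" "dist t 0 < d" using d(1) by (auto simp: t_def)
  then show ?thesis using d(2)[of t] by (intro exI[of _ t]) (auto simp: g_def)
qed

theorem lemma3p5:
  fixes S :: "int ^ 'k \<Rightarrow> 'a::metric_space \<Rightarrow> 'a"
  assumes "zk_system S" and "aperiodic S" and "zero_dimensional TYPE('a)"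
  shows "\<forall>R > 0. \<exists>L0 > 0. \<forall>(L::nat) (U::'a set).
           L > 0 \<and> real L \<ge> L0 \<and> open U \<and> closed U \<and>
           UNIV = (\<Union>n \<in> {n. znorm n < real L}. S n ` U) \<and>
           (\<forall>n. 0 < znorm n \<and> znorm n < real L \<longrightarrow> U \<inter> S n ` U = {}) \<longrightarrow>
           (\<forall>x. \<forall>n \<in> retC S U x.
              real (card (boundaryZ R (voronoiZ S U x n))) / real (card (voronoiZ S U x n)) < 1 / R)"
proof -
  from assms(1) have S0: "S 0 = id" and Sadd: "\<And>m n. S (m+n) = S m \<circ> S n"
    by (auto simp: zk_system_def)
  show ?thesis
  proof (intro allI impI)
    fix R :: real assume R: "R > 0"
    define k where "k = CARD('k)"
    obtain t where t: "0 < t" "t < 1" "(1+t)^k - (1-t)^k < (1/R) * (1-t)^k"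
      using exists_t0[OF R] by blast
    define L0 where "L0 = 2 * (R + real k) / t"
    show "\<exists>L0>0. \<forall>(L::nat) (U::'a set).
           L > 0 \<and> real L \<ge> L0 \<and> open U \<and> closed U \<and>
           UNIV = (\<Union>n \<in> {n. znorm n < real L}. S n ` U) \<and>
           (\<forall>n. 0 < znorm n \<and> znorm n < real L \<longrightarrow> U \<inter> S n ` U = {}) \<longrightarrow>
           (\<forall>x. \<forall>n \<in> retC S U x.
              real (card (boundaryZ R (voronoiZ S U x n))) / real (card (voronoiZ S U x n)) < 1 / R)"
    proof (intro exI[of _ L0] conjI allI impI)
      show "L0 > 0" using R t by (simp add: L0_def)
      fix L :: nat and U :: "'a set" and x :: 'a
      assume H: "0 < L \<and> L0 \<le> real L \<and> open U \<and> closed U \<and>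
           UNIV = (\<Union>n \<in> {n. znorm n < real L}. S n ` U) \<and>
           (\<forall>n. 0 < znorm n \<and> znorm n < real L \<longrightarrow> U \<inter> S n ` U = {})"
      then have cov: "UNIV = (\<Union>n \<in> {n. znorm n < real L}. S n ` U)"
        and sep: "\<And>n. 0 < znorm n \<Longrightarrow> znorm n < real L \<Longrightarrow> U \<inter> S n ` U = {}"
        and LL: "L0 \<le> real L" and Lpos: "0 < L" by auto
      show "\<forall>n \<in> retC S U x.
              real (card (boundaryZ R (voronoiZ S U x n))) / real (card (voronoiZ S U x n)) < 1 / R"
      proof (intro ballI)
        fix n assume n: "n \<in> retC S U x"
        define C where "C = retC S U x"
        define c where "c = rvec n"
        define V where "V = voronoi S U x n"
        define r where "r = real L / 2"
        have rpos: "r > 0" using Lpos by (simp add: r_def)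
        have "t * real L \<ge> 2 * (R + real k)"
          using LL t(1) by (simp add: L0_def divide_le_eq mult.commute)
        then have tr: "R + real k / 2 \<le> t * r" and tr2: "real k / 2 \<le> t * r"
          using R by (simp_all add: r_def)
        have znorm_eq: "znorm (a - b) = dist (rvec a) (rvec b)" for a b :: "int ^ 'k"
          by (simp add: znorm_def rvec_diff dist_norm)
        have Sx: "S m x \<in> U \<longleftrightarrow> m \<in> C" for m by (simp add: C_def retC_def)
        have sepC: "real L \<le> dist (rvec m) c" if m: "m \<in> C" "m \<noteq> n" for m
        proof (rule ccontr)
          assume "\<not> real L \<le> dist (rvec m) c"
          then have lt: "znorm (m - n) < real L" by (simp add: znorm_eq c_def)
          have "rvec (m - n) \<noteq> 0" using m(2) by (simp add: rvec_zero_iff)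
          then have pos: "0 < znorm (m - n)" by (simp add: znorm_def)
          have "S m x = S (m - n) (S n x)" using Sadd[of "m - n" n] by simp
          moreover have "S n x \<in> U" "S m x \<in> U" using n m(1) by (auto simp: Sx C_def)
          ultimately have "S m x \<in> U \<inter> S (m - n) ` U" by auto
          with sep[OF pos lt] show False by blast
        qed
        have covC: "\<exists>m\<in>C. znorm (p - m) < real L" for p
        proof -
          have "S p x \<in> (\<Union>n \<in> {n. znorm n < real L}. S n ` U)" using cov by blast
          then obtain q u where q: "znorm q < real L" "u \<in> U" "S p x = S q u" by auto
          have "S (-q) (S q u) = u" using Sadd[of "-q" q] S0 by (metis add.left_inverse comp_apply id_apply)
          then have "S (-q + p) x = u" using Sadd[of "-q" p] q(3) by simp
          then have "p - q \<in> C" using q(2) by (simp add: Sx[symmetric])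
          moreover have "p - (p - q) = q" by simp
          ultimately show ?thesis using q(1) by metis
        qed
        have Vdef: "V = (\<Inter>m\<in>C. {u. dist u c \<le> dist u (rvec m)})"
          by (auto simp: V_def voronoi_def C_def c_def)
        have memV: "u \<in> V \<longleftrightarrow> (\<forall>m\<in>C. dist u c \<le> dist u (rvec m))" for u
          by (simp add: Vdef)
        have ball: "cball c r \<subseteq> V"
        proof
          fix u assume u: "u \<in> cball c r"
          show "u \<in> V" unfolding memV
          proof
            fix m assume m: "m \<in> C"
            show "dist u c \<le> dist u (rvec m)"
            proof (cases "m = n")
              case True then show ?thesis by (simp add: c_def)
            next
              case False
              have "real L \<le> dist (rvec m) c" using sepC[OF m False] .
              also have "\<dots> \<le> dist u (rvec m) + dist u c" by (metis dist_commute dist_triangle)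
              finally show ?thesis using u by (simp add: r_def dist_commute)
            qed
          qed
        qed
        have bnd: "V \<subseteq> cball c (real L + real k / 2)"
        proof
          fix u assume u: "u \<in> V"
          define p :: "int ^ 'k" where "p = (\<chi> i. round (u $ i))"
          have "u \<in> cube p" unfolding p_def by (rule cube_round)
          then have up: "dist u (rvec p) \<le> real k / 2" using cube_norm by (simp add: dist_norm k_def)
          obtain m where m: "m \<in> C" "znorm (p - m) < real L" using covC by blast
          have "dist u c \<le> dist u (rvec m)" using u m(1) by (simp add: memV)
          also have "\<dots> \<le> dist u (rvec p) + dist (rvec p) (rvec m)" by (rule dist_triangle)
          also have "\<dots> \<le> real k / 2 + real L" using up m(2) by (simp add: znorm_eq)
          finally show "u \<in> cball c (real L + real k / 2)" by (simp add: dist_commute)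
        qed
        have convV: "convex V" unfolding Vdef by (intro convex_INT convex_closer)
        have closedV: "closed V" unfolding Vdef
          by (intro closed_INT ballI closed_Collect_le continuous_intros)
        have compV: "compact V" using bnd closedV
          by (meson bounded_cball bounded_subset compact_eq_bounded_closed)
        define Z where "Z = voronoiZ S U x n"
        have memZ: "m \<in> Z \<longleftrightarrow> rvec m \<in> V" for m by (simp add: Z_def V_def voronoiZ_def)
        define Bd where "Bd = boundaryZ R Z"
        define \<mu> where "\<mu> = measure lebesgue V"
        have "measure lebesgue (cball c r) = measure lborel (cball c r)"
          by (metis borel_closed closed_cball measure_completion sets_lborel)
        also have "\<dots> > 0" using content_cball_pos[OF rpos] by simp
        also have "measure lebesgue (cball c r) \<le> \<mu>" unfolding \<mu>_def
          by (rule measure_mono_fmeasurable[OF ball]) (auto intro: lmeasurable_compact compV)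
        finally have mupos: "\<mu> > 0" by simp
        have hp: "hom (1+t) c V \<in> lmeasurable" "measure lebesgue (hom (1+t) c V) = (1+t)^k * \<mu>"
          using hom_measure[OF compV, of "1+t" c] t by (simp_all add: k_def \<mu>_def)
        have hm: "hom (1-t) c V \<in> lmeasurable" "measure lebesgue (hom (1-t) c V) = (1-t)^k * \<mu>"
          using hom_measure[OF compV, of "1-t" c] t by (simp_all add: k_def \<mu>_def)
        have hsub: "hom (1-t) c V \<subseteq> hom (1+t) c V"
        proof
          fix y assume yh: "y \<in> hom (1-t) c V"
          have "y + 0 \<in> V"
            by (rule hom_in[OF convV ball t(1) less_imp_le[OF t(2)] yh]) (use rpos t in simp)
          then have "y + 0 + 0 \<in> hom (1+t) c V"
            by (intro hom_out[OF convV ball t(1)]) (use rpos t in simp_all)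
          then show "y \<in> hom (1+t) c V" by simp
        qed
        define A where "A = hom (1+t) c V - hom (1-t) c V"
        have Ameas: "A \<in> lmeasurable" unfolding A_def
          by (rule fmeasurable_Diff[OF hp(1) fmeasurableD[OF hm(1)]])
        have "finite Bd \<and> real (card Bd) \<le> measure lebesgue A"
        proof (rule count_le_measure[OF Ameas])
          fix p assume "p \<in> Bd"
          then obtain m m' where m: "m \<in> Z" "znorm (p - m) \<le> R" and m': "m' \<notin> Z" "znorm (p - m') \<le> R"
            by (auto simp: Bd_def boundaryZ_def)
          show "cube p \<subseteq> A"
          proof
            fix y assume y: "y \<in> cube p"
            have yp: "norm (y - rvec p) \<le> real k / 2" using cube_norm[OF y] by (simp add: k_def)
            have "norm (y - rvec m) \<le> norm (y - rvec p) + norm (rvec p - rvec m)"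
              by (metis diff_add_cancel norm_triangle_ineq add_diff_eq)
            also have "\<dots> \<le> t * r" using yp m(2) tr by (simp add: znorm_eq dist_norm)
            finally have nb: "norm (y - rvec m) \<le> t * r" .
            have "rvec m + (y - rvec m) \<in> hom (1+t) c V"
              by (rule hom_out[OF convV ball t(1) _ nb]) (use m(1) in \<open>simp add: memZ\<close>)
            then have in1: "y \<in> hom (1+t) c V" by simp
            have "y \<notin> hom (1-t) c V"
            proof
              assume yh: "y \<in> hom (1-t) c V"
              have "norm (rvec m' - y) \<le> norm (rvec m' - rvec p) + norm (rvec p - y)"
                by (metis diff_add_cancel norm_triangle_ineq add_diff_eq)
              also have "\<dots> \<le> t * r" using yp m'(2) tr
                by (simp add: znorm_eq dist_norm norm_minus_commute)
              finally have nb': "norm (rvec m' - y) \<le> t * r" .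
              have "y + (rvec m' - y) \<in> V"
                by (rule hom_in[OF convV ball t(1) less_imp_le[OF t(2)] yh nb'])
              then show False using m'(1) by (simp add: memZ)
            qed
            with in1 show "y \<in> A" by (simp add: A_def)
          qed
        qed
        moreover have "measure lebesgue A = (1+t)^k * \<mu> - (1-t)^k * \<mu>"
          unfolding A_def
          by (subst measurable_measure_Diff[OF hp(1) fmeasurableD[OF hm(1)] hsub])
             (simp add: hp(2) hm(2))
        ultimately have upper: "real (card Bd) \<le> ((1+t)^k - (1-t)^k) * \<mu>"
          by (simp add: algebra_simps)
        have "finite Z \<and> real (card Z) \<le> measure lebesgue (cball c (real L + real k))"
        proof (rule count_le_measure)
          show "cball c (real L + real k) \<in> lmeasurable" by simp
          fix p assume p: "p \<in> Z"
          show "cube p \<subseteq> cball c (real L + real k)"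
          proof
            fix y assume y: "y \<in> cube p"
            have yp: "norm (y - rvec p) \<le> real k / 2" using cube_norm[OF y] by (simp add: k_def)
            have "rvec p \<in> cball c (real L + real k / 2)" using bnd p by (auto simp: memZ)
            then have "dist c (rvec p) \<le> real L + real k / 2" by simp
            moreover have "dist c y \<le> dist c (rvec p) + dist (rvec p) y" by (rule dist_triangle)
            ultimately show "y \<in> cball c (real L + real k)" using yp
              by (simp add: dist_norm norm_minus_commute)
          qed
        qed
        then have finZ: "finite Z" by simp
        have "measure lebesgue (hom (1-t) c V) \<le> real (card Z)"
        proof (rule measure_le_count[OF finZ hm(1)])
          show "hom (1-t) c V \<subseteq> (\<Union>p\<in>Z. cube p)"
          proof
            fix y assume yh: "y \<in> hom (1-t) c V"
            define p :: "int ^ 'k" where "p = (\<chi> i. round (y $ i))"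
            have y: "y \<in> cube p" unfolding p_def by (rule cube_round)
            have "norm (rvec p - y) \<le> t * r" using cube_norm[OF y] tr2
              by (simp add: k_def norm_minus_commute)
            then have "y + (rvec p - y) \<in> V"
              by (rule hom_in[OF convV ball t(1) less_imp_le[OF t(2)] yh])
            then have "p \<in> Z" by (simp add: memZ)
            with y show "y \<in> (\<Union>p\<in>Z. cube p)" by blast
          qed
        qed
        then have lower: "(1-t)^k * \<mu> \<le> real (card Z)" using hm(2) by simp
        have pos1: "(1-t)^k * \<mu> > 0" using t mupos by simp
        have "real (card Bd) < (1/R) * ((1-t)^k * \<mu>)"
          using upper mult_strict_right_mono[OF t(3) mupos] by (simp add: algebra_simps)
        also have "\<dots> \<le> (1/R) * real (card Z)" using lower R by (intro mult_left_mono) simp_all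
        finally have "real (card Bd) < real (card Z) / R" by simp
        moreover have "real (card Z) > 0" using lower pos1 by linarith
        ultimately have "real (card Bd) / real (card Z) < 1 / R"
          using R by (simp add: divide_less_eq field_simps)
        then show "real (card (boundaryZ R (voronoiZ S U x n))) / real (card (voronoiZ S U x n)) < 1 / R"
          by (simp add: Bd_def Z_def)
      qed
    qed
  qed
qed


end
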